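(* For all integers $n\le d\le r\le R_{\mathrm{typ\text{-}max}}(n,d,n)$, there exist matrices $\mathbf A,\mathbf C\in\mathbb{R}^{n\times r}$, $\mathbf B\in\mathbb{R}^{d\times r}$ and a vector $\mathbf h_0\in\mathbb{R}^n$ such that the CP rank of $[\![\mathbf A,\mathbf B,\mathbf C]\!]$ equals $r$ and $\operatorname{rank}(\mathbf B\,\mathrm{diag}(\mathbf A^\top\mathbf h_0)\mathbf C^\top)=\operatorname{rank}(\tanh(\mathbf B\,\mathrm{diag}(\mathbf A^\top\mathbf h_0)\mathbf C^\top))=n$, where $\tanh$ is applied componentwise.
   Context: For $\mathbf A\in\mathbb{R}^{n\times r},\mathbf B\in\mathbb{R}^{d\times r},\mathbf C\in\mathbb{R}^{n\times r}$ with columns $\mathbf a_s,\mathbf b_s,\mathbf c_s$, $[\![\mathbf A,\mathbf B,\mathbf C]\!]=\sum_{s=1}^r\mathbf a_s\circ\mathbf b_s\circ\mathbf c_s\in\mathbb{R}^{n\times d\times n}$. The CP rank of a tensor is the least number of rank-one (outer product) terms summing to it. A typical rank of $\mathbb{R}^{n\times d\times n}$ is a value $R$ such that the set of tensors of CP rank $R$ has positive Lebesgue measure; $R_{\mathrm{typ\text{-}max}}(n,d,n)$ is the largest typical rank. *)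

theory Defs
  imports "HOL-Analysis.Lebesgue_Measure" "Jordan_Normal_Form.DL_Rank"
begin

text \<open>Third-order real tensors of shape n x d x m are represented as functions on
  index triples; only the entries with indices in the box matter.\<close>

definition tensor_box :: "nat \<Rightarrow> nat \<Rightarrow> nat \<Rightarrow> (nat \<times> nat \<times> nat) set" where
  "tensor_box n d m = {..<n} \<times> {..<d} \<times> {..<m}"

definition cp_rank :: "nat \<Rightarrow> nat \<Rightarrow> nat \<Rightarrow> (nat \<times> nat \<times> nat \<Rightarrow> real) \<Rightarrow> nat" where
  "cp_rank n d m T = (LEAST R. \<exists>a b c :: nat \<Rightarrow> nat \<Rightarrow> real.
      \<forall>i<n. \<forall>j<d. \<forall>k<m. T (i, j, k) = (\<Sum>s<R. a s i * b s j * c s k))"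

definition tensor_lebesgue :: "nat \<Rightarrow> nat \<Rightarrow> nat \<Rightarrow> (nat \<times> nat \<times> nat \<Rightarrow> real) measure" where
  "tensor_lebesgue n d m = Pi\<^sub>M (tensor_box n d m) (\<lambda>_. lborel)"

definition typical_rank :: "nat \<Rightarrow> nat \<Rightarrow> nat \<Rightarrow> nat \<Rightarrow> bool" where
  "typical_rank n d m R \<longleftrightarrow>
     (let S = {T \<in> space (tensor_lebesgue n d m). cp_rank n d m T = R}
      in S \<in> sets (tensor_lebesgue n d m) \<and> emeasure (tensor_lebesgue n d m) S > 0)"

definition R_typ_max :: "nat \<Rightarrow> nat \<Rightarrow> nat \<Rightarrow> nat" where
  "R_typ_max n d m = Max {R. typical_rank n d m R}"

definition cp_tensor :: "real mat \<Rightarrow> real mat \<Rightarrow> real mat \<Rightarrow> (nat \<times> nat \<times> nat \<Rightarrow> real)" where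
  "cp_tensor A B C = (\<lambda>(i, j, k). \<Sum>s<dim_col A. A $$ (i, s) * B $$ (j, s) * C $$ (k, s))"

definition diag_of_vec :: "real vec \<Rightarrow> real mat" where
  "diag_of_vec v = mat (dim_vec v) (dim_vec v) (\<lambda>(i, j). if i = j then v $ i else 0)"

definition mat_rank :: "real mat \<Rightarrow> nat" where
  "mat_rank M = vec_space.rank (dim_row M) M"

end

theory Submission
  imports Defs "HOL-Analysis.Function_Metric"
begin

definition maff :: "'i set \<Rightarrow> (('i \<Rightarrow> real) \<Rightarrow> real) \<Rightarrow> bool" where
 "maff I f \<longleftrightarrow> (\<forall>x \<in> space (PiM I (\<lambda>_. lborel)). \<forall>i\<in>I. \<forall>t.
     f (x(i:=t)) = f (x(i:=0)) + t * (f (x(i:=1)) - f (x(i:=0))))"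

lemma upd_meas:
  assumes "i \<notin> I"
  shows "(\<lambda>x. x(i := c)) \<in> measurable (PiM I (\<lambda>_. lborel)) (PiM (insert i I) (\<lambda>_. lborel))"
proof -
  have "(\<lambda>x. x(i := (\<lambda>_. c) x)) \<in> measurable (PiM I (\<lambda>_. lborel)) (PiM (I \<union> {i}) (\<lambda>_. lborel))"
    by (rule measurable_fun_upd[where J=I]) auto
  then show ?thesis by simp
qed

lemma null_maff:
  assumes "finite I" "f \<in> borel_measurable (PiM I (\<lambda>_. lborel))" "maff I f"
    "x0 \<in> space (PiM I (\<lambda>_. lborel))" "f x0 \<noteq> 0"
  shows "{x \<in> space (PiM I (\<lambda>_. lborel)). f x = 0} \<in> null_sets (PiM I (\<lambda>_. lborel))"
  using assms
proof (induction I arbitrary: f x0 rule: finite_induct)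
  case empty
  then have "{x \<in> space (PiM {} (\<lambda>_. lborel)). f x = 0} = {}"
    by (auto simp: space_PiM)
  moreover have "{} \<in> null_sets (PiM {} (\<lambda>_::'a. lborel::real measure))" by simp
  ultimately show ?case by metis
next
  case (insert i I f x0)
  let ?M = "\<lambda>I. PiM I (\<lambda>_::'a. lborel::real measure)"
  interpret product_sigma_finite "\<lambda>_::'a. lborel::real measure" by standard
  define h0 where "h0 x = f (x(i:=0))" for x
  define g1 where "g1 x = f (x(i:=1)) - f (x(i:=0))" for x
  have fm[measurable]: "f \<in> borel_measurable (?M (insert i I))" by fact
  have um[measurable]: "(\<lambda>x. x(i := c)) \<in> measurable (?M I) (?M (insert i I))" for c
    using upd_meas[OF insert(2)] .
  have h0m[measurable]: "h0 \<in> borel_measurable (?M I)" unfolding h0_def by measurable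
  have g1m[measurable]: "g1 \<in> borel_measurable (?M I)" unfolding g1_def by measurable
  have sp: "x(i:=c) \<in> space (?M (insert i I))" if "x \<in> space (?M I)" for x c
    using that by (auto simp: space_PiM PiE_iff extensional_def)
  have spj: "x(j:=c) \<in> space (?M I)" if "x \<in> space (?M I)" "j \<in> I" for x c j
    using that by (auto simp: space_PiM PiE_iff extensional_def)
  have aff: "f (x(i:=t)) = h0 x + t * g1 x" if "x \<in> space (?M I)" for x t
  proof -
    have "f ((x(i:=t))(i:=t)) = f ((x(i:=t))(i:=0)) + t * (f ((x(i:=t))(i:=1)) - f ((x(i:=t))(i:=0)))"
      using insert.prems(2) sp[OF that] unfolding maff_def by blast
    then show ?thesis by (simp add: h0_def g1_def)
  qed
  have comm: "x(j:=t, i:=c) = x(i:=c, j:=t)" if "j \<in> I" for x :: "'a \<Rightarrow> real" and j t c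
    using that insert(2) by (auto simp: fun_upd_twist)
  have mh0: "maff I h0" unfolding maff_def
  proof (intro ballI allI)
    fix x j t assume x: "x \<in> space (?M I)" and j: "j \<in> I"
    have "f ((x(i:=0))(j:=t)) = f ((x(i:=0))(j:=0)) + t * (f ((x(i:=0))(j:=1)) - f ((x(i:=0))(j:=0)))"
      using insert.prems(2) sp[OF x] j unfolding maff_def by blast
    then show "h0 (x(j:=t)) = h0 (x(j:=0)) + t * (h0 (x(j:=1)) - h0 (x(j:=0)))"
      unfolding h0_def comm[OF j] by simp
  qed
  have mg1: "maff I g1" unfolding maff_def
  proof (intro ballI allI)
    fix x j t assume x: "x \<in> space (?M I)" and j: "j \<in> I"
    have a: "f ((x(i:=0))(j:=t)) = f ((x(i:=0))(j:=0)) + t * (f ((x(i:=0))(j:=1)) - f ((x(i:=0))(j:=0)))"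
      using insert.prems(2) sp[OF x] j unfolding maff_def by blast
    have b: "f ((x(i:=1))(j:=t)) = f ((x(i:=1))(j:=0)) + t * (f ((x(i:=1))(j:=1)) - f ((x(i:=1))(j:=0)))"
      using insert.prems(2) sp[OF x] j unfolding maff_def by blast
    show "g1 (x(j:=t)) = g1 (x(j:=0)) + t * (g1 (x(j:=1)) - g1 (x(j:=0)))"
      unfolding g1_def comm[OF j] using a b by (simp add: algebra_simps)
  qed
  define N where "N = {x \<in> space (?M I). g1 x = 0 \<and> h0 x = 0}"
  have Nm: "N \<in> sets (?M I)" unfolding N_def by measurable
  have Nnull: "N \<in> null_sets (?M I)"
  proof (cases "\<exists>x\<in>space (?M I). g1 x \<noteq> 0")
    case True
    then obtain x where "x \<in> space (?M I)" "g1 x \<noteq> 0" by blast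
    from insert.IH[OF g1m mg1 this]
    show ?thesis by (rule null_sets_subset) (use Nm N_def in auto)
  next
    case False
    define x1 where "x1 = x0(i:=undefined)"
    have x1: "x1 \<in> space (?M I)" using insert.prems(3) insert(2)
      by (auto simp: space_PiM PiE_iff extensional_def x1_def)
    have "x0 = x1(i := x0 i)" by (simp add: x1_def)
    then have "f x0 = h0 x1 + x0 i * g1 x1" using aff[OF x1] by metis
    then have "h0 x1 \<noteq> 0" using False x1 insert.prems(4) by auto
    from insert.IH[OF h0m mh0 x1 this]
    show ?thesis by (rule null_sets_subset) (use Nm N_def in auto)
  qed
  define Z where "Z = {x \<in> space (?M (insert i I)). f x = 0}"
  have Zm[measurable]: "Z \<in> sets (?M (insert i I))" unfolding Z_def by measurable
  have inner: "(\<integral>\<^sup>+ y. indicator Z (x(i := y)) \<partial>lborel) = 0"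
    if x: "x \<in> space (?M I)" "x \<notin> N" for x
  proof -
    have "(\<lambda>y. indicator Z (x(i := y)) :: ennreal) = indicator {y. h0 x + y * g1 x = 0}"
      using sp[OF x(1)] aff[OF x(1)] by (auto simp: Z_def indicator_def fun_eq_iff)
    moreover have "emeasure lborel {y. h0 x + y * g1 x = 0} = 0"
    proof (cases "g1 x = 0")
      case True
      then have "h0 x \<noteq> 0" using x by (auto simp: N_def)
      with True have "{y. h0 x + y * g1 x = 0} = {}" by auto
      then show ?thesis by simp
    next
      case False
      then have "{y. h0 x + y * g1 x = 0} = {- h0 x / g1 x}" by (auto simp: field_simps)
      then show ?thesis by simp
    qed
    ultimately show ?thesis by simp
  qed
  have "emeasure (?M (insert i I)) Z = (\<integral>\<^sup>+ z. indicator Z z \<partial>?M (insert i I))"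
    by simp
  also have "\<dots> = (\<integral>\<^sup>+ x. (\<integral>\<^sup>+ y. indicator Z (x(i := y)) \<partial>lborel) \<partial>?M I)"
    using insert(1,2) by (intro product_nn_integral_insert) auto
  also have "\<dots> = (\<integral>\<^sup>+ x. 0 \<partial>?M I)"
  proof (rule nn_integral_cong_AE)
    have "AE x in ?M I. x \<notin> N" using Nnull by (rule AE_not_in)
    with AE_space show "AE x in ?M I. (\<integral>\<^sup>+ y. indicator Z (x(i := y)) \<partial>lborel) = 0"
      by eventually_elim (use inner in auto) 
  qed
  finally have "emeasure (?M (insert i I)) Z = 0" by simp
  then show ?case using Zm Z_def by auto
qed

definition detf :: "nat \<Rightarrow> (nat\<times>nat\<times>nat \<Rightarrow> real) \<Rightarrow> real" where
  "detf n T = det (mat n n (\<lambda>(j,k). T (0,j,k)))"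

lemma detf_formula: "detf n T = (\<Sum>p\<in>{p. p permutes {0..<n}}. signof p * (\<Prod>i=0..<n. T (0, i, p i)))"
proof -
  have "detf n T = (\<Sum>p\<in>{p. p permutes {0..<n}}. signof p * (\<Prod>i=0..<n. mat n n (\<lambda>(j,k). T (0,j,k)) $$ (i, p i)))"
    unfolding detf_def by (rule det_def') simp
  also have "\<dots> = (\<Sum>p\<in>{p. p permutes {0..<n}}. signof p * (\<Prod>i=0..<n. T (0, i, p i)))"
  proof (rule sum.cong[OF refl])
    fix p assume "p \<in> {p. p permutes {0..<n}}"
    then have pp: "p permutes {0..<n}" by simp
    have "(\<Prod>i=0..<n. mat n n (\<lambda>(j,k). T (0,j,k)) $$ (i, p i)) = (\<Prod>i=0..<n. T (0, i, p i))"
    proof (rule prod.cong[OF refl])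
      fix i assume "i \<in> {0..<n}"
      then have "p i < n" using permutes_in_image[OF pp] by auto
      then show "mat n n (\<lambda>(j,k). T (0,j,k)) $$ (i, p i) = T (0, i, p i)" using \<open>i \<in> {0..<n}\<close> by simp
    qed
    then show "signof p * (\<Prod>i=0..<n. mat n n (\<lambda>(j,k). T (0,j,k)) $$ (i, p i)) = signof p * (\<Prod>i=0..<n. T (0, i, p i))"
      by simp
  qed
  finally show ?thesis .
qed

lemma detf_meas:
  assumes "n \<le> d"
  shows "detf n \<in> borel_measurable (PiM (tensor_box n d n) (\<lambda>_. lborel))"
proof -
  have comp: "(\<lambda>T::nat\<times>nat\<times>nat\<Rightarrow>real. T (0, i, p i)) \<in> borel_measurable (PiM (tensor_box n d n) (\<lambda>_. lborel))"
    if "p permutes {0..<n}" "i \<in> {0..<n}" for p i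
  proof -
    have "p i < n" using permutes_in_image[OF that(1)] that(2) by auto
    then have "(0, i, p i) \<in> tensor_box n d n" using that(2) assms by (auto simp: tensor_box_def)
    then have "(\<lambda>T::nat\<times>nat\<times>nat\<Rightarrow>real. T (0, i, p i)) \<in> measurable (PiM (tensor_box n d n) (\<lambda>_. lborel)) lborel"
      by (rule measurable_component_singleton)
    then show ?thesis by simp
  qed
  have "(\<lambda>T::nat\<times>nat\<times>nat\<Rightarrow>real. \<Sum>p\<in>{p. p permutes {0..<n}}. signof p * (\<Prod>i=0..<n. T (0, i, p i))) \<in> borel_measurable (PiM (tensor_box n d n) (\<lambda>_. lborel))"
  proof (rule borel_measurable_sum)
    fix p assume pp: "p \<in> {p. p permutes {0..<n}}"
    have "(\<lambda>T::nat\<times>nat\<times>nat\<Rightarrow>real. \<Prod>i=0..<n. T (0, i, p i)) \<in> borel_measurable (PiM (tensor_box n d n) (\<lambda>_. lborel))"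
      using borel_measurable_prod[of "{0..<n}" "\<lambda>i (T::nat\<times>nat\<times>nat\<Rightarrow>real). T (0,i,p i)" "PiM (tensor_box n d n) (\<lambda>_. lborel)"] comp[of p] pp by auto
    then show "(\<lambda>T::nat\<times>nat\<times>nat\<Rightarrow>real. signof p * (\<Prod>i=0..<n. T (0, i, p i))) \<in> borel_measurable (PiM (tensor_box n d n) (\<lambda>_. lborel))"
      by (intro borel_measurable_times borel_measurable_const)
  qed
  then show ?thesis by (simp add: detf_formula[abs_def])
qed

lemma prod_upd_affine:
  assumes "finite S"
  shows "\<exists>\<alpha> \<beta>. \<forall>t::real. (\<Prod>i\<in>S. if i = a \<and> P then t else g i) = \<alpha> + t * \<beta>"
proof (cases "a \<in> S \<and> P")
  case True
  have "(\<Prod>i\<in>S. if i = a \<and> P then t else g i) = 0 + t * (\<Prod>i\<in>S-{a}. g i)" for t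
    using True assms by (subst prod.remove[of _ a]) auto
  then show ?thesis by blast
next
  case False
  have "(\<Prod>i\<in>S. if i = a \<and> P then t else g i) = (\<Prod>i\<in>S. g i)" for t
    using False by (intro prod.cong) auto
  then have "(\<Prod>i\<in>S. if i = a \<and> P then t else g i) = (\<Prod>i\<in>S. g i) + t * 0" for t
    by simp
  then show ?thesis by blast
qed

lemma sum_affine:
  assumes "finite P" "\<forall>p\<in>P. \<exists>\<alpha> \<beta>. \<forall>t::real. F p t = \<alpha> + t * \<beta>"
  shows "\<exists>\<alpha> \<beta>. \<forall>t. (\<Sum>p\<in>P. F p t) = \<alpha> + t * \<beta>"
proof -
  from assms(2) obtain al where "\<forall>p\<in>P. \<exists>\<beta>. \<forall>t::real. F p t = al p + t * \<beta>" by metis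
  then obtain be where ab: "\<forall>p\<in>P. \<forall>t::real. F p t = al p + t * be p" by metis
  have "(\<Sum>p\<in>P. F p t) = (\<Sum>p\<in>P. al p) + t * (\<Sum>p\<in>P. be p)" for t
    using ab by (simp add: sum.distrib sum_distrib_left)
  then show ?thesis by blast
qed

lemma affine_maff_aux:
  assumes "\<forall>t::real. F t = \<alpha> + t * \<beta>"
  shows "F t = F 0 + t * (F 1 - F 0)"
  using assms by simp

lemma detf_maff:
  shows "maff (tensor_box n d n) (detf n)"
  unfolding maff_def
proof (intro ballI allI)
  fix x c t assume "c \<in> tensor_box n d n"
  obtain c1 c2 c3 where c: "c = (c1, c2, c3)" by (cases c) auto
  have "\<exists>\<alpha> \<beta>. \<forall>t. detf n (x(c:=t)) = \<alpha> + t * \<beta>"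
  proof -
    have eq: "detf n (x(c:=t)) = (\<Sum>p\<in>{p. p permutes {0..<n}}. signof p *
        (\<Prod>i\<in>{0..<n}. if i = c2 \<and> (c1 = 0 \<and> p c2 = c3) then t else x (0, i, p i)))" for t
      unfolding detf_formula c by (intro sum.cong refl arg_cong2[where f="(*)"] prod.cong) auto
    have "\<forall>p\<in>{p. p permutes {0..<n}}. \<exists>\<alpha> \<beta>. \<forall>t. signof p *
        (\<Prod>i\<in>{0..<n}. if i = c2 \<and> (c1 = 0 \<and> p c2 = c3) then t else x (0, i, p i)) = \<alpha> + t * \<beta>"
    proof
      fix p
      obtain \<alpha> \<beta> where "\<forall>t::real. (\<Prod>i\<in>{0..<n}. if i = c2 \<and> (c1 = 0 \<and> p c2 = c3) then t else x (0, i, p i)) = \<alpha> + t * \<beta>"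
        using prod_upd_affine[OF finite_atLeastLessThan, where a=c2 and P="c1 = 0 \<and> p c2 = c3" and g="\<lambda>i. x (0,i,p i)"] by blast
      then have "\<forall>t. signof p *
        (\<Prod>i\<in>{0..<n}. if i = c2 \<and> (c1 = 0 \<and> p c2 = c3) then t else x (0, i, p i)) = signof p * \<alpha> + t * (signof p * \<beta>)"
        by (simp add: algebra_simps)
      then show "\<exists>\<alpha> \<beta>. \<forall>t. signof p *
        (\<Prod>i\<in>{0..<n}. if i = c2 \<and> (c1 = 0 \<and> p c2 = c3) then t else x (0, i, p i)) = \<alpha> + t * \<beta>" by blast
    qed
    from sum_affine[OF _ this] have "\<exists>\<alpha> \<beta>. \<forall>t. (\<Sum>p\<in>{p. p permutes {0..<n}}. signof p *
        (\<Prod>i\<in>{0..<n}. if i = c2 \<and> (c1 = 0 \<and> p c2 = c3) then t else x (0, i, p i))) = \<alpha> + t * \<beta>"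
      by (simp add: finite_permutations)
    then show ?thesis using eq by simp
  qed
  then obtain \<alpha> \<beta> where "\<forall>t. detf n (x(c:=t)) = \<alpha> + t * \<beta>" by blast
  then show "detf n (x(c:=t)) = detf n (x(c:=0)) + t * (detf n (x(c:=1)) - detf n (x(c:=0)))"
    by (rule affine_maff_aux)
qed

lemma detf_nonzero:
  assumes "n \<le> d"
  shows "\<exists>x0\<in>space (PiM (tensor_box n d n) (\<lambda>_. lborel)). detf n x0 \<noteq> 0"
proof -
  define x0 where "x0 = restrict (\<lambda>(i::nat,j::nat,k::nat). if j = k then 1 else (0::real)) (tensor_box n d n)"
  have "x0 \<in> space (PiM (tensor_box n d n) (\<lambda>_. lborel))" by (simp add: space_PiM x0_def)
  moreover have "mat n n (\<lambda>(j,k). x0 (0,j,k)) = 1\<^sub>m n"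
    using assms by (intro eq_matI) (auto simp: x0_def tensor_box_def)
  then have "detf n x0 = 1" by (simp add: detf_def)
  ultimately show ?thesis by (metis zero_neq_one)
qed

lemma detf_null:
  assumes "n \<le> d"
  shows "{x \<in> space (PiM (tensor_box n d n) (\<lambda>_. lborel)). detf n x = 0} \<in> null_sets (PiM (tensor_box n d n) (\<lambda>_. lborel))"
  using detf_nonzero[OF assms] null_maff[OF _ detf_meas[OF assms] detf_maff] by (auto simp: tensor_box_def)

definition hasdec :: "nat \<Rightarrow> nat \<Rightarrow> nat \<Rightarrow> nat \<Rightarrow> (nat \<times> nat \<times> nat \<Rightarrow> real) \<Rightarrow> bool" where
  "hasdec n d m R T \<longleftrightarrow> (\<exists>a b c :: nat \<Rightarrow> nat \<Rightarrow> real.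
      \<forall>i<n. \<forall>j<d. \<forall>k<m. T (i, j, k) = (\<Sum>s<R. a s i * b s j * c s k))"

lemma cp_rank_hasdec: "cp_rank n d m T = (LEAST R. hasdec n d m R T)"
  unfolding cp_rank_def hasdec_def by simp

lemma hasdec_mono:
  assumes "hasdec n d m R T" "R \<le> R'"
  shows "hasdec n d m R' T"
proof -
  obtain a b c where abc: "\<forall>i<n. \<forall>j<d. \<forall>k<m. T (i, j, k) = (\<Sum>s<R. a s i * b s j * c s k)"
    using assms(1) unfolding hasdec_def by blast
  define a' where "a' s i = (if s < R then a s i else 0)" for s i
  have "(\<Sum>s<R'. a' s i * b s j * c s k) = (\<Sum>s<R. a s i * b s j * c s k)" for i j k
  proof -
    have "(\<Sum>s<R'. a' s i * b s j * c s k) = (\<Sum>s\<in>{..<R}. a' s i * b s j * c s k)"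
      using assms(2) by (intro sum.mono_neutral_right) (auto simp: a'_def)
    then show ?thesis by (simp add: a'_def)
  qed
  then show ?thesis using abc unfolding hasdec_def by metis
qed

lemma hasdec_bound: "hasdec n d m (n*d) T"
proof -
  define a where "a s i = (if i = s div d then 1 else (0::real))" for s i :: nat
  define b where "b s j = (if j = s mod d then 1 else (0::real))" for s j :: nat
  define c where "c s k = T (s div d, s mod d, k)" for s k :: nat
  have "T (i, j, k) = (\<Sum>s<n*d. a s i * b s j * c s k)" if "i < n" "j < d" for i j k
  proof -
    have "(\<Sum>s<n*d. a s i * b s j * c s k) = (\<Sum>s<n*d. if s = i*d + j then T (i,j,k) else 0)"
    proof (rule sum.cong[OF refl])
      fix s assume "s \<in> {..<n*d}"
      have "(i = s div d \<and> j = s mod d) \<longleftrightarrow> s = i*d + j"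
      proof
        assume "i = s div d \<and> j = s mod d" then show "s = i*d+j" by (metis div_mult_mod_eq)
      next
        assume "s = i*d+j" then show "i = s div d \<and> j = s mod d" using that by simp
      qed
      then show "a s i * b s j * c s k = (if s = i*d + j then T (i,j,k) else 0)"
        by (auto simp: a_def b_def c_def)
    qed
    also have "\<dots> = T (i,j,k)"
    proof -
      have "i*d + j < n*d"
      proof -
        have "i*d + j < i*d + d" using that by simp
        also have "\<dots> = (i+1)*d" by simp
        also have "\<dots> \<le> n*d" using that by (intro mult_right_mono) auto
        finally show ?thesis .
      qed
      then show ?thesis by simp
    qed
    finally show ?thesis by simp
  qed
  then show ?thesis unfolding hasdec_def by blast
qed

lemma cp_rank_le_iff: "cp_rank n d m T \<le> R \<longleftrightarrow> hasdec n d m R T"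
proof
  assume "cp_rank n d m T \<le> R"
  moreover have "hasdec n d m (cp_rank n d m T) T"
    unfolding cp_rank_hasdec by (rule LeastI[of _ "n*d"]) (rule hasdec_bound)
  ultimately show "hasdec n d m R T" using hasdec_mono by blast
next
  assume "hasdec n d m R T"
  then show "cp_rank n d m T \<le> R" unfolding cp_rank_hasdec by (rule Least_le)
qed

lemma cp_rank_bound: "cp_rank n d m T \<le> n*d"
  using cp_rank_le_iff hasdec_bound by blast

lemma cp_rank_hasdec_self: "hasdec n d m (cp_rank n d m T) T"
  using cp_rank_le_iff by blast

lemma cp_rank_cong:
  assumes "\<And>i j k. i<n \<Longrightarrow> j<d \<Longrightarrow> k<m \<Longrightarrow> T (i,j,k) = U (i,j,k)"
  shows "cp_rank n d m T = cp_rank n d m U"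
  unfolding cp_rank_def using assms by simp

definition Phi :: "nat \<Rightarrow> nat \<Rightarrow> nat \<Rightarrow> nat \<Rightarrow> (nat\<times>nat\<times>nat \<Rightarrow> real) \<Rightarrow> (nat\<times>nat\<times>nat \<Rightarrow> real)" where
  "Phi n d m R p = (\<lambda>x. if x \<in> tensor_box n d m then
      (\<Sum>s<R. p (0, s, fst x) * p (1, s, fst (snd x)) * p (2, s, snd (snd x))) else 0)"

definition zb :: "nat \<Rightarrow> nat \<Rightarrow> nat \<Rightarrow> (nat\<times>nat\<times>nat \<Rightarrow> real) \<Rightarrow> (nat\<times>nat\<times>nat \<Rightarrow> real)" where
  "zb n d m T = (\<lambda>x. if x \<in> tensor_box n d m then T x else 0)"

definition Kb :: "nat \<Rightarrow> (nat\<times>nat\<times>nat \<Rightarrow> real) set" where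
  "Kb N = PiE UNIV (\<lambda>_. {- real N .. real N})"

lemma Kb_compact: "compact (Kb N)"
proof -
  have "compactin (product_topology (\<lambda>_. euclidean) UNIV) (Kb N :: (nat\<times>nat\<times>nat \<Rightarrow> real) set)"
    unfolding Kb_def by (subst compactin_PiE) auto
  then show ?thesis by (simp add: euclidean_product_topology)
qed

lemma Phi_cont: "continuous_on UNIV (Phi n d m R)"
  unfolding Phi_def
proof (rule continuous_on_coordinatewise_then_product)
  fix x :: "nat\<times>nat\<times>nat"
  have c: "continuous_on UNIV (\<lambda>p::nat\<times>nat\<times>nat\<Rightarrow>real. p y)" for y
    by (rule continuous_on_product_coordinates)
  have "continuous_on UNIV (\<lambda>p::nat\<times>nat\<times>nat\<Rightarrow>real.
      (\<Sum>s<R. p (0, s, fst x) * p (1, s, fst (snd x)) * p (2, s, snd (snd x))))"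
    by (intro continuous_on_sum continuous_on_mult c)
  then show "continuous_on UNIV (\<lambda>p::nat\<times>nat\<times>nat\<Rightarrow>real. if x \<in> tensor_box n d m then
      (\<Sum>s<R. p (0, s, fst x) * p (1, s, fst (snd x)) * p (2, s, snd (snd x))) else 0)"
    by (cases "x \<in> tensor_box n d m") (auto intro: continuous_on_const)
qed

lemma Phi_closed: "closed (Phi n d m R ` Kb N)"
proof -
  have "continuous_on (Kb N) (Phi n d m R)" by (rule continuous_on_subset[OF Phi_cont]) auto
  then have "compact (Phi n d m R ` Kb N)" by (rule compact_continuous_image[OF _ Kb_compact])
  then show ?thesis by (rule compact_imp_closed)
qed

lemma zb_meas: "zb n d m \<in> borel_measurable (PiM (tensor_box n d m) (\<lambda>_. lborel))"
proof (rule measurable_coordinatewise_then_product)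
  fix x :: "nat\<times>nat\<times>nat"
  show "(\<lambda>T::nat\<times>nat\<times>nat\<Rightarrow>real. zb n d m T x) \<in> borel_measurable (PiM (tensor_box n d m) (\<lambda>_. lborel))"
  proof (cases "x \<in> tensor_box n d m")
    case True
    then have "(\<lambda>T::nat\<times>nat\<times>nat\<Rightarrow>real. T x) \<in> measurable (PiM (tensor_box n d m) (\<lambda>_. lborel)) lborel"
      by (rule measurable_component_singleton)
    then have m: "(\<lambda>T::nat\<times>nat\<times>nat\<Rightarrow>real. T x) \<in> borel_measurable (PiM (tensor_box n d m) (\<lambda>_. lborel))"
      by (simp only: measurable_lborel1)
    have "(\<lambda>T::nat\<times>nat\<times>nat\<Rightarrow>real. zb n d m T x) = (\<lambda>T. T x)"
      using True by (simp add: zb_def fun_eq_iff)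
    then show ?thesis using m by (simp only:)
  next
    case False
    have "(\<lambda>T::nat\<times>nat\<times>nat\<Rightarrow>real. zb n d m T x) = (\<lambda>T. 0)"
      using False by (simp add: zb_def fun_eq_iff)
    then show ?thesis by (simp only: borel_measurable_const)
  qed
qed

lemma hasdec_iff_Phi: "hasdec n d m R T \<longleftrightarrow> (\<exists>N. zb n d m T \<in> Phi n d m R ` Kb N)"
proof
  assume "hasdec n d m R T"
  then obtain a b c where abc: "\<forall>i<n. \<forall>j<d. \<forall>k<m. T (i, j, k) = (\<Sum>s<R. a s i * b s j * c s k)"
    unfolding hasdec_def by blast
  define p0 :: "nat\<times>nat\<times>nat \<Rightarrow> real" where "p0 y = (case y of (q, s, i) \<Rightarrow> if q = 0 then a s i else if q = 1 then b s i else c s i)" for y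
  define Rel where "Rel = {0..(2::nat)} \<times> {..<R} \<times> {..<n+d+m}"
  define p where "p y = (if y \<in> Rel then p0 y else 0)" for y
  define B where "B = (\<Sum>y\<in>Rel. \<bar>p0 y\<bar>)"
  have fin: "finite Rel" unfolding Rel_def by auto
  have pb: "\<bar>p y\<bar> \<le> B" for y
  proof (cases "y \<in> Rel")
    case True
    then show ?thesis unfolding p_def B_def using fin by (auto intro!: member_le_sum[where f="\<lambda>y. \<bar>p0 y\<bar>"])
  next
    case False
    have "0 \<le> B" unfolding B_def by (intro sum_nonneg) auto
    then show ?thesis using False by (simp add: p_def)
  qed
  define N where "N = nat \<lceil>B\<rceil>"
  have "B \<le> real N" unfolding N_def by linarith
  have "p y \<in> {- real N .. real N}" for y
  proof -
    have "\<bar>p y\<bar> \<le> real N" using pb[of y] \<open>B \<le> real N\<close> by linarith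
    then show ?thesis by (simp add: abs_le_iff)
  qed
  then have "p \<in> Kb N" unfolding Kb_def by auto
  moreover have "Phi n d m R p = zb n d m T"
  proof
    fix x :: "nat\<times>nat\<times>nat"
    obtain i j k where x: "x = (i, j, k)" by (cases x) auto
    show "Phi n d m R p x = zb n d m T x"
    proof (cases "x \<in> tensor_box n d m")
      case True
      then have ijk: "i<n" "j<d" "k<m" by (auto simp: x tensor_box_def)
      have "(\<Sum>s<R. p (0, s, i) * p (1, s, j) * p (2, s, k)) = (\<Sum>s<R. a s i * b s j * c s k)"
        using ijk by (intro sum.cong) (auto simp: p_def p0_def Rel_def)
      then show ?thesis using True abc ijk by (simp add: Phi_def zb_def x)
    next
      case False
      then show ?thesis by (simp add: Phi_def zb_def)
    qed
  qed
  ultimately show "\<exists>N. zb n d m T \<in> Phi n d m R ` Kb N" by (metis image_eqI)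
next
  assume "\<exists>N. zb n d m T \<in> Phi n d m R ` Kb N"
  then obtain p where p: "zb n d m T = Phi n d m R p" by blast
  have "T (i, j, k) = (\<Sum>s<R. p (0,s,i) * p (1,s,j) * p (2,s,k))" if "i<n" "j<d" "k<m" for i j k
    using fun_cong[OF p, of "(i,j,k)"] that by (simp add: zb_def Phi_def tensor_box_def)
  then show "hasdec n d m R T" unfolding hasdec_def
    by (intro exI[of _ "\<lambda>s i. p (0,s,i)"] exI[of _ "\<lambda>s j. p (1,s,j)"] exI[of _ "\<lambda>s k. p (2,s,k)"]) auto
qed

lemma cp_rank_le_sets:
  "{T \<in> space (tensor_lebesgue n d m). cp_rank n d m T \<le> R} \<in> sets (tensor_lebesgue n d m)"
proof -
  define F where "F = (\<Union>N. Phi n d m R ` Kb N)"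
  have cl: "Phi n d m R ` Kb N \<in> sets borel" for N
    using Phi_closed by (rule borel_closed)
  have Fb: "F \<in> sets borel" unfolding F_def
    by (rule sets.countable_UN) (use cl in blast)
  have eq: "cp_rank n d m T \<le> R \<longleftrightarrow> zb n d m T \<in> F" for T
    unfolding F_def cp_rank_le_iff hasdec_iff_Phi by (simp only: UN_iff) blast
  have "{T \<in> space (tensor_lebesgue n d m). cp_rank n d m T \<le> R} =
     zb n d m -` F \<inter> space (PiM (tensor_box n d m) (\<lambda>_. lborel))"
    unfolding tensor_lebesgue_def eq by blast
  also have "\<dots> \<in> sets (PiM (tensor_box n d m) (\<lambda>_. lborel))"
    using measurable_sets[OF zb_meas Fb] .
  finally show ?thesis unfolding tensor_lebesgue_def .
qed

lemma cp_rank_eq_sets: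
  "{T \<in> space (tensor_lebesgue n d m). cp_rank n d m T = R} \<in> sets (tensor_lebesgue n d m)"
proof (cases R)
  case 0
  then have "{T \<in> space (tensor_lebesgue n d m). cp_rank n d m T = R} = {T \<in> space (tensor_lebesgue n d m). cp_rank n d m T \<le> 0}"
    by simp
  then show ?thesis using cp_rank_le_sets[of n d m 0] by simp
next
  case (Suc R')
  then have "{T \<in> space (tensor_lebesgue n d m). cp_rank n d m T = R} =
     {T \<in> space (tensor_lebesgue n d m). cp_rank n d m T \<le> R} - {T \<in> space (tensor_lebesgue n d m). cp_rank n d m T \<le> R'}"
    by (auto simp: le_Suc_eq)
  then show ?thesis using sets.Diff[OF cp_rank_le_sets[of n d m R] cp_rank_le_sets[of n d m R']] by simp
qed

lemma typical_le: "typical_rank n d m R \<Longrightarrow> R \<le> n*d"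
proof -
  assume "typical_rank n d m R"
  then have "emeasure (tensor_lebesgue n d m) {T \<in> space (tensor_lebesgue n d m). cp_rank n d m T = R} > 0"
    unfolding typical_rank_def Let_def by blast
  then have "{T \<in> space (tensor_lebesgue n d m). cp_rank n d m T = R} \<noteq> {}"
  proof (intro notI)
    assume e: "{T \<in> space (tensor_lebesgue n d m). cp_rank n d m T = R} = {}"
    assume p: "emeasure (tensor_lebesgue n d m) {T \<in> space (tensor_lebesgue n d m). cp_rank n d m T = R} > 0"
    have "emeasure (tensor_lebesgue n d m) {T \<in> space (tensor_lebesgue n d m). cp_rank n d m T = R} = 0"
      unfolding e by (rule emeasure_empty)
    with p show False by simp
  qed
  then obtain T where "cp_rank n d m T = R" by blast
  then show ?thesis using cp_rank_bound by metis
qed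

lemma space_pos: "emeasure (tensor_lebesgue n d m) (space (tensor_lebesgue n d m)) > 0"
proof -
  interpret product_sigma_finite "\<lambda>_::nat\<times>nat\<times>nat. lborel::real measure" by standard
  have fin: "finite (tensor_box n d m)" unfolding tensor_box_def by auto
  have "emeasure (tensor_lebesgue n d m) (PiE (tensor_box n d m) (\<lambda>_. {0..1::real})) = (\<Prod>i\<in>tensor_box n d m. emeasure lborel {0..1::real})"
    unfolding tensor_lebesgue_def by (rule emeasure_PiM[OF fin]) auto
  also have "\<dots> = 1" by simp
  finally have e1: "emeasure (tensor_lebesgue n d m) (PiE (tensor_box n d m) (\<lambda>_. {0..1::real})) = 1" .
  have "PiE (tensor_box n d m) (\<lambda>_. {0..1::real}) \<subseteq> space (tensor_lebesgue n d m)"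
    unfolding tensor_lebesgue_def by (auto simp: space_PiM PiE_iff)
  then have "emeasure (tensor_lebesgue n d m) (PiE (tensor_box n d m) (\<lambda>_. {0..1::real})) \<le> emeasure (tensor_lebesgue n d m) (space (tensor_lebesgue n d m))"
    by (intro emeasure_mono) auto
  then have "1 \<le> emeasure (tensor_lebesgue n d m) (space (tensor_lebesgue n d m))" using e1 by simp
  then show ?thesis using ennreal_zero_less_one by (rule order.strict_trans2[rotated])
qed

lemma typical_nonempty: "\<exists>R. typical_rank n d m R"
proof (rule ccontr)
  assume no: "\<nexists>R. typical_rank n d m R"
  let ?M = "tensor_lebesgue n d m"
  define S where "S R = {T \<in> space ?M. cp_rank n d m T = R}" for R
  have Sm: "S R \<in> sets ?M" for R unfolding S_def by (rule cp_rank_eq_sets)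
  have S0: "emeasure ?M (S R) = 0" for R
    using no Sm unfolding typical_rank_def Let_def S_def by (auto simp: not_less zero_less_iff_neq_zero)
  have "space ?M = (\<Union>R\<in>{..n*d}. S R)"
    unfolding S_def using cp_rank_bound by auto
  then have "emeasure ?M (space ?M) = emeasure ?M (\<Union>R\<in>{..n*d}. S R)" by simp
  also have "\<dots> \<le> (\<Sum>R\<in>{..n*d}. emeasure ?M (S R))"
    by (rule emeasure_subadditive_finite) (use Sm in auto)
  also have "\<dots> = 0" using S0 by simp
  finally show False using space_pos[of n d m] by simp
qed

lemma typ_max_typical: "typical_rank n d m (R_typ_max n d m)"
proof -
  have fin: "finite {R. typical_rank n d m R}"
    by (rule finite_subset[of _ "{..n*d}"]) (use typical_le in auto)
  have ne: "{R. typical_rank n d m R} \<noteq> {}" using typical_nonempty by auto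
  show ?thesis using Max_in[OF fin ne] unfolding R_typ_max_def by simp
qed

lemma good_T0:
  assumes "n \<le> d"
  shows "\<exists>T0. cp_rank n d n T0 = R_typ_max n d n \<and> detf n T0 \<noteq> 0"
proof (rule ccontr)
  assume no: "\<not> ?thesis"
  let ?M = "tensor_lebesgue n d n"
  let ?R = "R_typ_max n d n"
  define S where "S = {T \<in> space ?M. cp_rank n d n T = ?R}"
  have pos: "emeasure ?M S > 0" and Sm: "S \<in> sets ?M"
    using typ_max_typical[of n d n] unfolding typical_rank_def Let_def S_def by auto
  have null: "{x \<in> space ?M. detf n x = 0} \<in> null_sets ?M"
    using detf_null[OF assms] unfolding tensor_lebesgue_def .
  have "S \<subseteq> {x \<in> space ?M. detf n x = 0}" using no unfolding S_def by auto
  then have "emeasure ?M S \<le> emeasure ?M {x \<in> space ?M. detf n x = 0}"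
    by (intro emeasure_mono) (use null in auto)
  also have "\<dots> = 0" using null by auto
  finally show False using pos by simp
qed

lemma mat_vec_entry:
  assumes "v \<in> carrier_vec n" "j < m"
  shows "(mat m n F *\<^sub>v v) $ j = (\<Sum>l<n. F (j,l) * v $ l)"
  using assms by (simp add: scalar_prod_def lessThan_atLeast0 row_def)

lemma det_zero_kernel:
  assumes "det (mat n n F) = (0::real)"
  shows "\<exists>w. (\<exists>l<n. w l \<noteq> 0) \<and> (\<forall>j<n. (\<Sum>l<n. F (j,l) * w l) = 0)"
proof -
  obtain v where v: "v \<in> carrier_vec n" "v \<noteq> 0\<^sub>v n" "mat n n F *\<^sub>v v = 0\<^sub>v n"
    using det_0_iff_vec_prod_zero_field[of "mat n n F" n] assms by auto
  have "\<exists>l<n. v $ l \<noteq> 0"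
  proof (rule ccontr)
    assume "\<not> (\<exists>l<n. v $ l \<noteq> 0)"
    then have "v = 0\<^sub>v n" using v(1) by (intro eq_vecI) auto
    then show False using v(2) by simp
  qed
  moreover have "(\<Sum>l<n. F (j,l) * v $ l) = 0" if "j < n" for j
    using mat_vec_entry[OF v(1) that, of F] v(3) that by simp
  ultimately show ?thesis by blast
qed

lemma det_nz_inj:
  assumes "det (mat n n F) \<noteq> (0::real)" "\<forall>j<n. (\<Sum>l<n. F (j,l) * w l) = 0" "l < n"
  shows "w l = 0"
proof -
  define v where "v = vec n w"
  have vc: "v \<in> carrier_vec n" by (simp add: v_def)
  have "mat n n F *\<^sub>v v = 0\<^sub>v n"
  proof (rule eq_vecI)
    fix j assume "j < dim_vec (0\<^sub>v n :: real vec)"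
    then have j: "j < n" by simp
    show "(mat n n F *\<^sub>v v) $ j = 0\<^sub>v n $ j"
      using mat_vec_entry[OF vc j, of F] assms(2) j by (simp add: v_def)
  qed simp
  then have "v = 0\<^sub>v n" using det_0_iff_vec_prod_zero_field[of "mat n n F" n] assms(1) vc by auto
  then show ?thesis using assms(3) unfolding v_def by (metis index_vec index_zero_vec(1))
qed

lemma rank_inj:
  assumes M: "M \<in> carrier_mat d n" and inj: "\<forall>v\<in>carrier_vec n. M *\<^sub>v v = 0\<^sub>v d \<longrightarrow> v = 0\<^sub>v n"
  shows "mat_rank (M :: real mat) = n"
proof -
  interpret vec_space "TYPE(real)" d .
  have dist: "distinct (cols M)"
  proof -
    have "inj_on (col M) {0..<n}"
    proof (rule inj_onI)
      fix i j assume ij: "i \<in> {0..<n}" "j \<in> {0..<n}" "col M i = col M j"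
      show "i = j"
      proof (rule ccontr)
        assume ne: "i \<noteq> j"
        define v where "v = vec n (\<lambda>k. if k = i then 1 else if k = j then -1 else (0::real))"
        have vc: "v \<in> carrier_vec n" by (simp add: v_def)
        have "M *\<^sub>v v = 0\<^sub>v d"
        proof (rule eq_vecI)
          fix q assume "q < dim_vec (0\<^sub>v d :: real vec)"
          then have q: "q < d" by simp
          have "(M *\<^sub>v v) $ q = (\<Sum>l<n. M $$ (q,l) * v $ l)"
            using M q vc by (simp add: scalar_prod_def lessThan_atLeast0 row_def)
          also have "\<dots> = (\<Sum>l<n. (if l = i then M $$ (q,i) else 0) - (if l = j then M $$ (q,j) else 0))"
            using ne by (intro sum.cong) (auto simp: v_def)
          also have "\<dots> = M $$ (q,i) - M $$ (q,j)" using ij by (simp add: sum_subtractf)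
          also have "\<dots> = 0"
          proof -
            have e: "col M i $ q = col M j $ q" using ij(3) by simp
            have "col M i $ q = M $$ (q,i)" "col M j $ q = M $$ (q,j)" using M q ij(1,2) by auto
            then show ?thesis using e by simp
          qed
          finally show "(M *\<^sub>v v) $ q = 0\<^sub>v d $ q" using q by simp
        qed (use M in simp)
        then have "v = 0\<^sub>v n" using inj vc by blast
        then have "v $ i = 0" using ij by simp
        then show False using ij by (simp add: v_def)
      qed
    qed
    then show ?thesis using M by (simp add: cols_def distinct_map)
  qed
  have li: "lin_indpt (set (cols M))"
  proof (rule ccontr)
    assume "\<not> lin_indpt (set (cols M))"
    then obtain v where "v \<in> carrier_vec n" "v \<noteq> 0\<^sub>v n" "M *\<^sub>v v = 0\<^sub>v d"
      using lin_depE[OF M _ dist] by blast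
    then show False using inj by blast
  qed
  have "rank M = n" by (rule lin_indpt_full_rank[OF M dist li])
  then show ?thesis unfolding mat_rank_def using M by simp
qed

lemma descent_step:
  fixes \<alpha> :: "nat \<Rightarrow> real" and \<beta> \<gamma> :: "nat \<Rightarrow> nat \<Rightarrow> real"
  assumes fin: "finite I" and big: "n < card I"
    and nz: "det (mat n n (\<lambda>(j,l). \<Sum>s\<in>I. \<alpha> s * \<beta> s j * \<gamma> s l)) \<noteq> 0"
  shows "\<exists>s0\<in>I. det (mat n n (\<lambda>(j,l). \<Sum>s\<in>I-{s0}. \<alpha> s * \<beta> s j * \<gamma> s l)) \<noteq> 0"
proof (rule ccontr)
  assume "\<not> ?thesis"
  then have allz: "\<forall>s0\<in>I. det (mat n n (\<lambda>(j,l). \<Sum>s\<in>I-{s0}. \<alpha> s * \<beta> s j * \<gamma> s l)) = 0" by blast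
  define F where "F j l = (\<Sum>s\<in>I. \<alpha> s * \<beta> s j * \<gamma> s l)" for j l
  have nzF: "det (mat n n (\<lambda>(j,l). F j l)) \<noteq> 0" using nz unfolding F_def .
  have injF: "w l = 0" if "\<forall>j<n. (\<Sum>l<n. F j l * w l) = 0" "l < n" for w l
    using det_nz_inj[OF nzF, of w l] that by simp
  have "\<forall>s0\<in>I. \<exists>w. (\<exists>l<n. w l \<noteq> 0) \<and> (\<forall>j<n. (\<Sum>l<n. (\<Sum>s\<in>I-{s0}. \<alpha> s * \<beta> s j * \<gamma> s l) * w l) = 0)"
  proof
    fix s0 assume "s0 \<in> I"
    from det_zero_kernel[OF allz[rule_format, OF this]]
    show "\<exists>w. (\<exists>l<n. w l \<noteq> 0) \<and> (\<forall>j<n. (\<Sum>l<n. (\<Sum>s\<in>I-{s0}. \<alpha> s * \<beta> s j * \<gamma> s l) * w l) = 0)"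
      by simp
  qed
  then obtain W where W0: "\<forall>s0\<in>I. (\<exists>l<n. W s0 l \<noteq> 0) \<and> (\<forall>j<n. (\<Sum>l<n. (\<Sum>s\<in>I-{s0}. \<alpha> s * \<beta> s j * \<gamma> s l) * W s0 l) = 0)"
    by (rule bchoice[elim_format]) blast
  have W: "\<And>s0. s0 \<in> I \<Longrightarrow> (\<exists>l<n. W s0 l \<noteq> 0)"
     "\<And>s0 j. s0 \<in> I \<Longrightarrow> j < n \<Longrightarrow> (\<Sum>l<n. (\<Sum>s\<in>I-{s0}. \<alpha> s * \<beta> s j * \<gamma> s l) * W s0 l) = 0"
    using W0 by blast+
  define t where "t s0 = (\<Sum>l<n. \<gamma> s0 l * W s0 l)" for s0
  have key: "(\<Sum>l<n. F j l * W s0 l) = \<alpha> s0 * \<beta> s0 j * t s0" if "s0 \<in> I" "j < n" for s0 j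
  proof -
    have "F j l = (\<Sum>s\<in>I-{s0}. \<alpha> s * \<beta> s j * \<gamma> s l) + \<alpha> s0 * \<beta> s0 j * \<gamma> s0 l" for l
      unfolding F_def using fin that(1) by (simp add: sum.remove add.commute)
    then have "(\<Sum>l<n. F j l * W s0 l) = (\<Sum>l<n. (\<Sum>s\<in>I-{s0}. \<alpha> s * \<beta> s j * \<gamma> s l) * W s0 l)
        + (\<Sum>l<n. \<alpha> s0 * \<beta> s0 j * (\<gamma> s0 l * W s0 l))"
      by (simp add: distrib_right sum.distrib mult.assoc)
    also have "\<dots> = \<alpha> s0 * \<beta> s0 j * t s0"
      using W(2)[OF that] by (simp add: t_def sum_distrib_left)
    finally show ?thesis .
  qed
  have at: "\<alpha> s0 * t s0 \<noteq> 0" if "s0 \<in> I" for s0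
  proof
    assume "\<alpha> s0 * t s0 = 0"
    then have "\<forall>j<n. (\<Sum>l<n. F j l * W s0 l) = 0" using key[OF that] by (auto simp: mult.commute mult.left_commute)
    then have "\<forall>l<n. W s0 l = 0" using injF by blast
    then show False using W(1)[OF that] by blast
  qed
  define y where "y s0 l = W s0 l / t s0" for s0 l
  have Y1: "(\<Sum>l<n. F j l * y s0 l) = \<alpha> s0 * \<beta> s0 j" if "s0 \<in> I" "j < n" for s0 j
  proof -
    have tnz: "t s0 \<noteq> 0" using at[OF that(1)] by auto
    have "(\<Sum>l<n. F j l * y s0 l) = (\<Sum>l<n. F j l * W s0 l) / t s0"
      unfolding y_def by (simp add: sum_divide_distrib)
    also have "\<dots> = \<alpha> s0 * \<beta> s0 j" using key[OF that] tnz by simp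
    finally show ?thesis .
  qed
  have Y2: "(\<Sum>l<n. \<gamma> s0 l * y s0 l) = 1" if "s0 \<in> I" for s0
  proof -
    have tnz: "t s0 \<noteq> 0" using at[OF that(1)] by auto
    have "(\<Sum>l<n. \<gamma> s0 l * y s0 l) = (\<Sum>l<n. \<gamma> s0 l * W s0 l) / t s0"
      unfolding y_def by (simp add: sum_divide_distrib)
    also have "\<dots> = t s0 / t s0" by (simp only: t_def)
    finally have "(\<Sum>l<n. \<gamma> s0 l * y s0 l) = t s0 / t s0" .
    then show ?thesis using tnz by simp
  qed
  have diag: "(\<Sum>s\<in>I. \<gamma> s l0 * y s l0) = 1" if l0: "l0 < n" for l0
  proof -
    define z where "z l = (if l = l0 then 1 else 0) - (\<Sum>s\<in>I. \<gamma> s l0 * y s l)" for l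
    have "(\<Sum>l<n. F j l * z l) = 0" if j: "j < n" for j
    proof -
      have "(\<Sum>l<n. F j l * z l) = (\<Sum>l<n. F j l * (if l = l0 then 1 else 0)) - (\<Sum>l<n. \<Sum>s\<in>I. F j l * (\<gamma> s l0 * y s l))"
        unfolding z_def by (simp add: right_diff_distrib sum_subtractf sum_distrib_left)
      also have "(\<Sum>l<n. F j l * (if l = l0 then 1 else 0)) = F j l0"
        using l0 by (simp add: if_distrib cong: if_cong)
      also have "(\<Sum>l<n. \<Sum>s\<in>I. F j l * (\<gamma> s l0 * y s l)) = (\<Sum>s\<in>I. \<gamma> s l0 * (\<Sum>l<n. F j l * y s l))"
        by (subst sum.swap) (simp add: sum_distrib_left mult.commute mult.left_commute)
      also have "\<dots> = (\<Sum>s\<in>I. \<gamma> s l0 * (\<alpha> s * \<beta> s j))"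
        using Y1 j by (intro sum.cong) auto
      also have "\<dots> = F j l0" unfolding F_def by (simp add: mult.commute mult.left_commute)
      finally show ?thesis by simp
    qed
    then have "z l0 = 0" using injF l0 by blast
    then show ?thesis unfolding z_def by simp
  qed
  have "real n = (\<Sum>l0<n. (1::real))" by simp
  also have "\<dots> = (\<Sum>l0<n. \<Sum>s\<in>I. \<gamma> s l0 * y s l0)" using diag by simp
  also have "\<dots> = (\<Sum>s\<in>I. \<Sum>l0<n. \<gamma> s l0 * y s l0)" by (rule sum.swap)
  also have "\<dots> = (\<Sum>s\<in>I. (1::real))" using Y2 by simp
  also have "\<dots> = real (card I)" by simp
  finally show False using big by simp
qed

lemma descent:
  fixes \<alpha> :: "nat \<Rightarrow> real" and \<beta> \<gamma> :: "nat \<Rightarrow> nat \<Rightarrow> real"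
  assumes "finite I" "n \<le> r" "r \<le> card I"
    and "det (mat n n (\<lambda>(j,l). \<Sum>s\<in>I. \<alpha> s * \<beta> s j * \<gamma> s l)) \<noteq> 0"
  shows "\<exists>J\<subseteq>I. card J = r \<and> det (mat n n (\<lambda>(j,l). \<Sum>s\<in>J. \<alpha> s * \<beta> s j * \<gamma> s l)) \<noteq> 0"
  using assms
proof (induction "card I - r" arbitrary: I)
  case 0
  then have "card I = r" by simp
  then show ?case using 0 by blast
next
  case (Suc x I)
  then have big: "n < card I" by simp
  obtain s0 where s0: "s0 \<in> I" "det (mat n n (\<lambda>(j,l). \<Sum>s\<in>I-{s0}. \<alpha> s * \<beta> s j * \<gamma> s l)) \<noteq> 0"
    using descent_step[OF Suc.prems(1) big Suc.prems(4)] by blast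
  have c: "card (I - {s0}) = card I - 1" using s0(1) Suc.prems(1) by simp
  have "\<exists>J\<subseteq>I-{s0}. card J = r \<and> det (mat n n (\<lambda>(j,l). \<Sum>s\<in>J. \<alpha> s * \<beta> s j * \<gamma> s l)) \<noteq> 0"
    using Suc.hyps(1)[of "I-{s0}"] Suc.hyps(2) Suc.prems(1,2,3) c s0(2) by simp
  then show ?case by blast
qed

lemma hasdec_cong:
  assumes "hasdec n d m p T" "\<And>i j k. i<n \<Longrightarrow> j<d \<Longrightarrow> k<m \<Longrightarrow> T (i,j,k) = U (i,j,k)"
  shows "hasdec n d m p U"
  using assms unfolding hasdec_def by metis

lemma hasdec_add:
  assumes "hasdec n d m p T" "hasdec n d m q U"
  shows "hasdec n d m (p+q) (\<lambda>x. T x + U x)"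
proof -
  obtain a b c where abc: "\<forall>i<n. \<forall>j<d. \<forall>k<m. T (i, j, k) = (\<Sum>s<p. a s i * b s j * c s k)"
    using assms(1) unfolding hasdec_def by blast
  obtain a' b' c' where abc': "\<forall>i<n. \<forall>j<d. \<forall>k<m. U (i, j, k) = (\<Sum>s<q. a' s i * b' s j * c' s k)"
    using assms(2) unfolding hasdec_def by blast
  define A where "A s = (if s < p then a s else a' (s - p))" for s
  define B where "B s = (if s < p then b s else b' (s - p))" for s
  define C where "C s = (if s < p then c s else c' (s - p))" for s
  have "(\<Sum>s<p+q. A s i * B s j * C s k) = (\<Sum>s<p. a s i * b s j * c s k) + (\<Sum>s<q. a' s i * b' s j * c' s k)" for i j k
  proof -
    have "(\<Sum>s<p+q. A s i * B s j * C s k) = (\<Sum>s<p. A s i * B s j * C s k) + (\<Sum>s=p..<p+q. A s i * B s j * C s k)"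
      by (simp add: lessThan_atLeast0 sum.atLeastLessThan_concat)
    also have "(\<Sum>s<p. A s i * B s j * C s k) = (\<Sum>s<p. a s i * b s j * c s k)"
      by (intro sum.cong) (auto simp: A_def B_def C_def)
    also have "(\<Sum>s=p..<p+q. A s i * B s j * C s k) = (\<Sum>s=0..<q. A (s+p) i * B (s+p) j * C (s+p) k)"
      using sum.shift_bounds_nat_ivl[of "\<lambda>s. A s i * B s j * C s k" 0 p q] by (simp add: add.commute)
    also have "\<dots> = (\<Sum>s<q. a' s i * b' s j * c' s k)"
      by (simp add: A_def B_def C_def lessThan_atLeast0)
    finally show ?thesis .
  qed
  then show ?thesis unfolding hasdec_def using abc abc' by (intro exI[of _ A] exI[of _ B] exI[of _ C]) auto
qed

lemma hasdec_set:
  assumes "finite I"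
  shows "hasdec n d m (card I) (\<lambda>(i,j,k). \<Sum>s\<in>I. a s i * b s j * c s k)"
proof -
  obtain f where f: "bij_betw f {0..<card I} I" using ex_bij_betw_nat_finite[OF assms] by blast
  have "(\<Sum>s\<in>I. a s i * b s j * c s k) = (\<Sum>s<card I. a (f s) i * b (f s) j * c (f s) k)" for i j k
    using sum.reindex_bij_betw[OF f, of "\<lambda>s. a s i * b s j * c s k"] by (simp add: lessThan_atLeast0)
  then show ?thesis unfolding hasdec_def
    by (intro exI[of _ "a \<circ> f"] exI[of _ "b \<circ> f"] exI[of _ "c \<circ> f"]) auto
qed

lemma sub_rank:
  assumes rk: "cp_rank n d m T0 = R"
    and dec: "\<And>i j k. i<n \<Longrightarrow> j<d \<Longrightarrow> k<m \<Longrightarrow> T0 (i,j,k) = (\<Sum>s<R. a s i * b s j * c s k)"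
    and I: "I \<subseteq> {..<R}"
  shows "cp_rank n d m (\<lambda>(i,j,k). \<Sum>s\<in>I. a s i * b s j * c s k) = card I"
proof -
  let ?TI = "\<lambda>(i,j,k). \<Sum>s\<in>I. a s i * b s j * c s k"
  let ?TJ = "\<lambda>(i,j,k). \<Sum>s\<in>{..<R}-I. a s i * b s j * c s k"
  have finI: "finite I" using I finite_subset by blast
  have le: "cp_rank n d m ?TI \<le> card I"
    using cp_rank_le_iff hasdec_set[OF finI] by blast
  have "\<not> cp_rank n d m ?TI < card I"
  proof
    assume lt: "cp_rank n d m ?TI < card I"
    have h1: "hasdec n d m (cp_rank n d m ?TI) ?TI" by (rule cp_rank_hasdec_self)
    have h2: "hasdec n d m (card ({..<R}-I)) ?TJ" by (rule hasdec_set) auto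
    have "hasdec n d m (cp_rank n d m ?TI + card ({..<R}-I)) (\<lambda>x. ?TI x + ?TJ x)"
      by (rule hasdec_add[OF h1 h2])
    then have h: "hasdec n d m (cp_rank n d m ?TI + card ({..<R}-I)) T0"
    proof (rule hasdec_cong)
      fix i j k assume "i<n" "j<d" "k<m"
      have "(\<Sum>s<R. a s i * b s j * c s k) = (\<Sum>s\<in>I. a s i * b s j * c s k) + (\<Sum>s\<in>{..<R}-I. a s i * b s j * c s k)"
        using I by (subst sum.subset_diff[of I "{..<R}"]) auto
      then show "?TI (i,j,k) + ?TJ (i,j,k) = T0 (i,j,k)" using dec[OF \<open>i<n\<close> \<open>j<d\<close> \<open>k<m\<close>] by simp
    qed
    have "card ({..<R}-I) = R - card I" using I finI by (simp add: card_Diff_subset)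
    moreover have "card I \<le> R" using I by (metis card_lessThan card_mono finite_lessThan)
    ultimately have "cp_rank n d m ?TI + card ({..<R}-I) < R" using lt by simp
    moreover have "cp_rank n d m T0 \<le> cp_rank n d m ?TI + card ({..<R}-I)"
      using h cp_rank_le_iff by blast
    ultimately show False using rk by simp
  qed
  then show ?thesis using le by simp
qed

lemma hasdec_mode3:
  assumes "hasdec n d m p T"
  shows "hasdec n d m p (\<lambda>(i,j,l). \<Sum>l'<m. T (i,j,l') * H l' l)"
proof -
  obtain a b c where abc: "\<forall>i<n. \<forall>j<d. \<forall>k<m. T (i, j, k) = (\<Sum>s<p. a s i * b s j * c s k)"
    using assms(1) unfolding hasdec_def by blast
  define c' where "c' s l = (\<Sum>l'<m. c s l' * H l' l)" for s l
  have "(\<Sum>l'<m. T (i,j,l') * H l' l) = (\<Sum>s<p. a s i * b s j * c' s l)" if "i<n" "j<d" for i j l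
  proof -
    have "(\<Sum>l'<m. T (i,j,l') * H l' l) = (\<Sum>l'<m. (\<Sum>s<p. a s i * b s j * c s l') * H l' l)"
      using abc that by simp
    also have "\<dots> = (\<Sum>s<p. \<Sum>l'<m. a s i * b s j * (c s l' * H l' l))"
      by (subst sum.swap) (simp add: sum_distrib_right mult.assoc)
    also have "\<dots> = (\<Sum>s<p. a s i * b s j * c' s l)"
      by (simp add: c'_def sum_distrib_left)
    finally show ?thesis .
  qed
  then show ?thesis unfolding hasdec_def by (intro exI[of _ a] exI[of _ b] exI[of _ c']) auto
qed

lemma cp_rank_mode3_le:
  "cp_rank n d m (\<lambda>(i,j,l). \<Sum>l'<m. T (i,j,l') * H l' l) \<le> cp_rank n d m T"
  using hasdec_mode3[OF cp_rank_hasdec_self] cp_rank_le_iff by blast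

lemma mat_inverse_ex:
  assumes "det (N :: real mat) \<noteq> 0" "N \<in> carrier_mat n n"
  shows "\<exists>G\<in>carrier_mat n n. N * G = 1\<^sub>m n \<and> G * N = 1\<^sub>m n"
proof -
  have "N \<in> Units (ring_mat TYPE(real) n ())" by (rule det_non_zero_imp_unit[OF assms(2,1)])
  then show ?thesis unfolding Units_def by (auto simp: ring_mat_simps)
qed

lemma entry_BDC:
  assumes B: "B \<in> carrier_mat d r" and v: "v \<in> carrier_vec r" and C: "C \<in> carrier_mat n r"
    and j: "j < d" and l: "l < n"
  shows "(B * diag_of_vec v * transpose_mat C) $$ (j,l) = (\<Sum>s<r. B $$ (j,s) * v $ s * C $$ (l,s))"
proof -
  have BD: "B * diag_of_vec v = mat d r (\<lambda>(j,s). B $$ (j,s) * v $ s)"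
  proof (rule eq_matI)
    fix j s assume js: "j < dim_row (mat d r (\<lambda>(j,s). B $$ (j,s) * v $ s))" "s < dim_col (mat d r (\<lambda>(j,s). B $$ (j,s) * v $ s))"
    then have js': "j < d" "s < r" by auto
    have "(B * diag_of_vec v) $$ (j,s) = (\<Sum>s'<r. B $$ (j,s') * (if s' = s then v $ s' else 0))"
      using B v js' by (simp add: diag_of_vec_def scalar_prod_def lessThan_atLeast0 row_def col_def)
    also have "\<dots> = B $$ (j,s) * v $ s"
      using js' by (simp add: if_distrib cong: if_cong)
    finally show "(B * diag_of_vec v) $$ (j,s) = mat d r (\<lambda>(j,s). B $$ (j,s) * v $ s) $$ (j,s)"
      using js' by simp
  qed (use B v in \<open>auto simp: diag_of_vec_def\<close>)
  show ?thesis unfolding BD using C j l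
    by (simp add: scalar_prod_def lessThan_atLeast0 row_def col_def)
qed

lemma rank_top_diag:
  assumes M: "M \<in> carrier_mat d n" and nd: "n \<le> d" and k: "\<kappa> \<noteq> 0"
    and top: "\<And>j l. j < n \<Longrightarrow> l < n \<Longrightarrow> M $$ (j,l) = (if j = l then \<kappa> else 0)"
  shows "mat_rank (M :: real mat) = n"
proof (rule rank_inj[OF M], intro ballI impI)
  fix v :: "real vec" assume v: "v \<in> carrier_vec n" and z: "M *\<^sub>v v = 0\<^sub>v d"
  show "v = 0\<^sub>v n"
  proof (rule eq_vecI)
    fix j assume "j < dim_vec (0\<^sub>v n :: real vec)"
    then have j: "j < n" by simp
    have "(M *\<^sub>v v) $ j = (\<Sum>l<n. M $$ (j,l) * v $ l)"
      using M v j nd by (simp add: scalar_prod_def lessThan_atLeast0 row_def)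
    also have "\<dots> = (\<Sum>l<n. if l = j then \<kappa> * v $ j else 0)"
      using top j by (intro sum.cong) auto
    also have "\<dots> = \<kappa> * v $ j" using j by simp
    finally have "\<kappa> * v $ j = 0" using z j nd by simp
    then show "v $ j = 0\<^sub>v n $ j" using k j by simp
  qed (use v in simp)
qed

theorem lemma2:
  fixes n d r :: nat
  assumes "n \<le> d" and "d \<le> r" and "r \<le> R_typ_max n d n"
  shows "\<exists>A B C :: real mat. \<exists>h0 :: real vec.
    A \<in> carrier_mat n r \<and> B \<in> carrier_mat d r \<and> C \<in> carrier_mat n r \<and> h0 \<in> carrier_vec n \<and>
    cp_rank n d n (cp_tensor A B C) = r \<and>
    mat_rank (B * diag_of_vec (transpose_mat A *\<^sub>v h0) * transpose_mat C) = n \<and>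
    mat_rank (map_mat tanh (B * diag_of_vec (transpose_mat A *\<^sub>v h0) * transpose_mat C)) = n"
proof -
  define R where "R = R_typ_max n d n"
  obtain T0 where T0: "cp_rank n d n T0 = R" "detf n T0 \<noteq> 0"
    using good_T0[OF assms(1)] unfolding R_def by blast
  obtain a b c where abc: "\<And>i j k. i<n \<Longrightarrow> j<d \<Longrightarrow> k<n \<Longrightarrow> T0 (i, j, k) = (\<Sum>s<R. a s i * b s j * c s k)"
    using cp_rank_hasdec_self[of n d n T0] unfolding T0(1) hasdec_def by blast
  have "mat n n (\<lambda>(j,l). \<Sum>s\<in>{..<R}. a s 0 * b s j * c s l) = mat n n (\<lambda>(j,k). T0 (0,j,k))"
    by (rule eq_matI) (use abc assms(1) in auto)
  then have detR: "det (mat n n (\<lambda>(j,l). \<Sum>s\<in>{..<R}. a s 0 * b s j * c s l)) \<noteq> 0"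
    using T0(2) unfolding detf_def by simp
  obtain J where J: "J \<subseteq> {..<R}" "card J = r"
     "det (mat n n (\<lambda>(j,l). \<Sum>s\<in>J. a s 0 * b s j * c s l)) \<noteq> 0"
    using descent[of "{..<R}" n r "\<lambda>s. a s 0" b c] detR assms unfolding R_def by auto
  define NJ where "NJ = mat n n (\<lambda>(j,l). \<Sum>s\<in>J. a s 0 * b s j * c s l)"
  have NJc: "NJ \<in> carrier_mat n n" unfolding NJ_def by simp
  obtain G where G: "G \<in> carrier_mat n n" "NJ * G = 1\<^sub>m n" "G * NJ = 1\<^sub>m n"
    using mat_inverse_ex[OF J(3)[folded NJ_def] NJc] by blast
  define c2 where "c2 s l = (\<Sum>l'<n. c s l' * G $$ (l', l))" for s l
  define T2 where "T2 = (\<lambda>(i,j,l). \<Sum>l'<n. T0 (i,j,l') * G $$ (l', l))"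
  have T2dec: "T2 (i,j,l) = (\<Sum>s<R. a s i * b s j * c2 s l)" if "i<n" "j<d" "l<n" for i j l
  proof -
    have "T2 (i,j,l) = (\<Sum>l'<n. (\<Sum>s<R. a s i * b s j * c s l') * G $$ (l', l))"
      unfolding T2_def using abc that by simp
    also have "\<dots> = (\<Sum>s<R. \<Sum>l'<n. a s i * b s j * (c s l' * G $$ (l', l)))"
      by (subst sum.swap) (simp add: sum_distrib_right mult.assoc)
    also have "\<dots> = (\<Sum>s<R. a s i * b s j * c2 s l)"
      by (simp add: c2_def sum_distrib_left)
    finally show ?thesis .
  qed
  have T2rk: "cp_rank n d n T2 = R"
  proof (rule antisym)
    show "cp_rank n d n T2 \<le> R" unfolding T2_def using cp_rank_mode3_le[of n d n T0 "\<lambda>l' l. G $$ (l', l)"] T0(1) by simp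
    have bk: "T0 (i,j,l) = (\<Sum>l'<n. T2 (i,j,l') * NJ $$ (l', l))" if "i<n" "j<d" "l<n" for i j l
    proof -
      have "(\<Sum>l'<n. T2 (i,j,l') * NJ $$ (l', l)) = (\<Sum>l'<n. (\<Sum>l''<n. T0 (i,j,l'') * G $$ (l'', l')) * NJ $$ (l', l))"
        unfolding T2_def by simp
      also have "\<dots> = (\<Sum>l'<n. \<Sum>l''<n. T0 (i,j,l'') * (G $$ (l'', l') * NJ $$ (l', l)))"
        by (simp add: sum_distrib_right mult.assoc)
      also have "\<dots> = (\<Sum>l''<n. \<Sum>l'<n. T0 (i,j,l'') * (G $$ (l'', l') * NJ $$ (l', l)))"
        by (rule sum.swap)
      also have "\<dots> = (\<Sum>l''<n. T0 (i,j,l'') * (\<Sum>l'<n. G $$ (l'', l') * NJ $$ (l', l)))"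
        by (simp add: sum_distrib_left)
      also have "\<dots> = (\<Sum>l''<n. T0 (i,j,l'') * (G * NJ) $$ (l'', l))"
        using G(1) NJc that by (intro sum.cong refl) (simp add: scalar_prod_def lessThan_atLeast0)
      also have "\<dots> = (\<Sum>l''<n. if l'' = l then T0 (i,j,l) else 0)"
        using G(3) that by (intro sum.cong) auto
      also have "\<dots> = T0 (i,j,l)" using that by simp
      finally show ?thesis by simp
    qed
    have "cp_rank n d n T0 = cp_rank n d n (\<lambda>(i,j,l). \<Sum>l'<n. T2 (i,j,l') * NJ $$ (l', l))"
      by (rule cp_rank_cong) (simp add: bk)
    then have "R = cp_rank n d n (\<lambda>(i,j,l). \<Sum>l'<n. T2 (i,j,l') * NJ $$ (l', l))"
      using T0(1) by simp
    also have "\<dots> \<le> cp_rank n d n T2" by (rule cp_rank_mode3_le)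
    finally show "R \<le> cp_rank n d n T2" .
  qed
  have TJrk: "cp_rank n d n (\<lambda>(i,j,k). \<Sum>s\<in>J. a s i * b s j * c2 s k) = r"
    using sub_rank[OF T2rk T2dec J(1)] J(2) by simp
  have topJ: "(\<Sum>s\<in>J. a s 0 * b s j * c2 s l) = (if j = l then 1 else 0)" if "j<n" "l<n" for j l
  proof -
    have "(\<Sum>s\<in>J. a s 0 * b s j * c2 s l) = (\<Sum>s\<in>J. \<Sum>l'<n. a s 0 * b s j * c s l' * G $$ (l', l))"
      by (simp add: c2_def sum_distrib_left mult.assoc)
    also have "\<dots> = (\<Sum>l'<n. \<Sum>s\<in>J. a s 0 * b s j * c s l' * G $$ (l', l))"
      by (rule sum.swap)
    also have "\<dots> = (\<Sum>l'<n. (\<Sum>s\<in>J. a s 0 * b s j * c s l') * G $$ (l', l))"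
      by (simp add: sum_distrib_right)
    also have "\<dots> = (\<Sum>l'<n. NJ $$ (j,l') * G $$ (l', l))"
      using that by (intro sum.cong) (auto simp: NJ_def)
    also have "\<dots> = (NJ * G) $$ (j,l)"
      using G(1) NJc that by (simp add: scalar_prod_def lessThan_atLeast0)
    also have "\<dots> = (if j = l then 1 else 0)" using G(2) that by simp
    finally show ?thesis .
  qed
  have finJ: "finite J" using J(1) finite_subset by blast
  obtain f where f: "bij_betw f {0..<r} J" using ex_bij_betw_nat_finite[OF finJ] J(2) by blast
  have reJ: "(\<Sum>s<r. g (f s)) = (\<Sum>s\<in>J. g s)" for g :: "nat \<Rightarrow> real"
    using sum.reindex_bij_betw[OF f, of g] by (simp add: lessThan_atLeast0)
  define A where "A = mat n r (\<lambda>(i,s). a (f s) i)"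
  define B where "B = mat d r (\<lambda>(j,s). b (f s) j)"
  define C where "C = mat n r (\<lambda>(l,s). c2 (f s) l)"
  define h0 where "h0 = vec n (\<lambda>i. if i = 0 then 1 else (0::real))"
  have Ac: "A \<in> carrier_mat n r" and Bc: "B \<in> carrier_mat d r" and Cc: "C \<in> carrier_mat n r"
    and hc: "h0 \<in> carrier_vec n" by (simp_all add: A_def B_def C_def h0_def)
  have cpt: "cp_rank n d n (cp_tensor A B C) = r"
  proof -
    have "cp_rank n d n (cp_tensor A B C) = cp_rank n d n (\<lambda>(i,j,k). \<Sum>s\<in>J. a s i * b s j * c2 s k)"
    proof (rule cp_rank_cong)
      fix i j k assume "i<n" "j<d" "k<n"
      then show "cp_tensor A B C (i,j,k) = (\<lambda>(i,j,k). \<Sum>s\<in>J. a s i * b s j * c2 s k) (i,j,k)"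
        using reJ[of "\<lambda>s. a s i * b s j * c2 s k"] by (simp add: cp_tensor_def A_def B_def C_def)
    qed
    then show ?thesis using TJrk by simp
  qed
  define MM where "MM = B * diag_of_vec (transpose_mat A *\<^sub>v h0) * transpose_mat C"
  have vc: "transpose_mat A *\<^sub>v h0 \<in> carrier_vec r" using Ac hc by simp
  have Dc: "diag_of_vec (transpose_mat A *\<^sub>v h0) \<in> carrier_mat r r" using vc Ac unfolding diag_of_vec_def by auto
  have CT: "transpose_mat C \<in> carrier_mat r n" using Cc by simp
  have MMc: "MM \<in> carrier_mat d n" unfolding MM_def by (rule mult_carrier_mat[OF mult_carrier_mat[OF Bc Dc] CT])
  have MMtop: "MM $$ (j,l) = (if j = l then 1 else 0)" if "j<n" "l<n" for j l
  proof -
    have n0: "0 < n" using that by simp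
    have av: "(transpose_mat A *\<^sub>v h0) $ s = a (f s) 0" if "s < r" for s
    proof -
      have "(transpose_mat A *\<^sub>v h0) $ s = (\<Sum>i<n. A $$ (i,s) * h0 $ i)"
        using Ac hc that by (simp add: scalar_prod_def lessThan_atLeast0 row_def)
      also have "\<dots> = (\<Sum>i<n. if i = 0 then a (f s) 0 else 0)"
        using that by (intro sum.cong) (auto simp: A_def h0_def)
      also have "\<dots> = a (f s) 0" using n0 by simp
      finally show ?thesis .
    qed
    have "MM $$ (j,l) = (\<Sum>s<r. B $$ (j,s) * (transpose_mat A *\<^sub>v h0) $ s * C $$ (l,s))"
      unfolding MM_def by (rule entry_BDC[OF Bc vc Cc]) (use that assms(1) in auto)
    also have "\<dots> = (\<Sum>s<r. a (f s) 0 * b (f s) j * c2 (f s) l)"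
      using that assms(1) av by (intro sum.cong) (auto simp: B_def C_def)
    also have "\<dots> = (\<Sum>s\<in>J. a s 0 * b s j * c2 s l)" by (rule reJ)
    also have "\<dots> = (if j = l then 1 else 0)" by (rule topJ[OF that])
    finally show ?thesis .
  qed
  have r1: "mat_rank MM = n"
    by (rule rank_top_diag[OF MMc assms(1), of 1]) (use MMtop in auto)
  have r2: "mat_rank (map_mat tanh MM) = n"
  proof (rule rank_top_diag[of _ d n "tanh 1"])
    show "map_mat tanh MM \<in> carrier_mat d n" using MMc by simp
    show "n \<le> d" by fact
    show "tanh (1::real) \<noteq> 0" by simp
    fix j l assume "j < n" "l < n"
    then show "map_mat tanh MM $$ (j,l) = (if j = l then tanh 1 else 0)"
      using MMc MMtop assms(1) by auto
  qed
  show ?thesis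
    by (rule exI[of _ A], rule exI[of _ B], rule exI[of _ C], rule exI[of _ h0])
       (use Ac Bc Cc hc cpt r1 r2 in \<open>simp add: MM_def\<close>)
qed

end
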